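(* Let $\gamma\in(0,1]$, $\alpha>0$ and $N$ be such that $0<\lambda=1-\gamma/N^\alpha<1$. Then $$-\frac1N\sum_{i=1}^b\big[(J^T(s^* ))^{-1}\big]_{ii}\,\tilde f_i(s^* )\ge\frac{\lambda\gamma}{3N^{1+\alpha}}.$$
   Context: $b\ge1$ is an integer. The mean-field vector field is $f_k(s)=\lambda(s_{k-1}^2-s_k^2)-(s_k-s_{k+1})$, $k=1,\dots,b$, with $s_0=1,s_{b+1}=0$; $s^*$ is its unique equilibrium in $\{s\in\mathbb R^b:1\ge s_1\ge\cdots\ge s_b\ge0\}$. $J(s^* )$ is the $b\times b$ tridiagonal Jacobian of $f$ at $s^*$ with $J_{kk}=-2\lambda s^*_k-1$, $J_{k,k+1}=1$, $J_{k+1,k}=2\lambda s^*_k$ (invertible). $\tilde f_i(s)=\frac12[\lambda(s_{i-1}^2-s_i^2)+(s_i-s_{i+1})]$. In the paper, $[(J^T(s^* ))^{-1}]_{ii}=\nabla^2 g(s)_{ii}$ for the solution $g$ of Stein's equation $\nabla g(s)\cdot J(s^* )(s-s^* )=\|s-s^*\|^2$, and the lemma is stated for $s$ with $\|s-s^*\|^{2r}\le N^{-\epsilon}$; the quantity does not depend on $s$. *)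

theory Defs
  imports Complex_Main "Jordan_Normal_Form.Matrix"
begin

(* States s :: nat => real, with s_1..s_b the coordinates and the boundary
   conventions s_0 = 1, s_(b+1) = 0 (we require s k = 0 for all k > b). *)

definition mf_field :: "real \<Rightarrow> (nat \<Rightarrow> real) \<Rightarrow> nat \<Rightarrow> real" where
  "mf_field lam s k = lam * ((s (k-1))\<^sup>2 - (s k)\<^sup>2) - (s k - s (k+1))"

definition mf_ftilde :: "real \<Rightarrow> (nat \<Rightarrow> real) \<Rightarrow> nat \<Rightarrow> real" where
  "mf_ftilde lam s i = (1/2) * (lam * ((s (i-1))\<^sup>2 - (s i)\<^sup>2) + (s i - s (i+1)))"

definition is_ord_equilibrium :: "real \<Rightarrow> nat \<Rightarrow> (nat \<Rightarrow> real) \<Rightarrow> bool" where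
  "is_ord_equilibrium lam b s \<longleftrightarrow>
     s 0 = 1 \<and> (\<forall>k>b. s k = 0) \<and>
     (\<forall>k. 1 \<le> k \<and> k \<le> b \<longrightarrow> s k \<le> s (k-1) \<and> s (k+1) \<le> s k) \<and>
     (\<forall>k. 1 \<le> k \<and> k \<le> b \<longrightarrow> mf_field lam s k = 0)"

definition sstar :: "real \<Rightarrow> nat \<Rightarrow> nat \<Rightarrow> real" where
  "sstar lam b = (THE s. is_ord_equilibrium lam b s)"

(* Jacobian J at sstar as b x b matrix; matrix index i (0-based) corresponds to k = i+1 *)
definition jac :: "real \<Rightarrow> nat \<Rightarrow> real mat" where
  "jac lam b = mat b b (\<lambda>(i,j).
     if i = j then - 2 * lam * sstar lam b (i+1) - 1
     else if j = i + 1 then 1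
     else if i = j + 1 then 2 * lam * sstar lam b (j+1)
     else 0)"

definition mat_inv :: "nat \<Rightarrow> real mat \<Rightarrow> real mat" where
  "mat_inv n A = (THE M. M \<in> carrier_mat n n \<and> A * M = 1\<^sub>m n \<and> M * A = 1\<^sub>m n)"

end

theory Submission
  imports Defs "Jordan_Normal_Form.Determinant"
begin


primrec xs :: "real \<Rightarrow> real \<Rightarrow> nat \<Rightarrow> real" where
  "xs lam t 0 = 1"
| "xs lam t (Suc k) = lam * ((xs lam t k)\<^sup>2 - t\<^sup>2)"

lemma eq_chain:
  assumes "is_ord_equilibrium lam b s" "k \<le> b"
  shows "s b \<le> s k"
proof -
  have "\<forall>j. j \<le> b - k \<longrightarrow> s (b - j) \<ge> s b"
  proof (intro allI impI)
    fix j assume "j \<le> b - k"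
    then show "s (b - j) \<ge> s b"
    proof (induction j)
      case 0 then show ?case by simp
    next
      case (Suc j)
      have k1: "1 \<le> b - j" "b - j \<le> b" "b - j - 1 = b - Suc j" using Suc.prems assms(2) by auto
      have "\<forall>k. 1 \<le> k \<and> k \<le> b \<longrightarrow> s k \<le> s (k-1) \<and> s (k+1) \<le> s k"
        using assms(1) unfolding is_ord_equilibrium_def by blast
      then have "s (b - j) \<le> s (b - j - 1)" using k1 by blast
      then have "s (b - j) \<le> s (b - Suc j)" using k1 by simp
      then show ?case using Suc by simp
    qed
  qed
  then have "s (b - (b - k)) \<ge> s b" by blast
  moreover have e: "b - (b - k) = k" using assms(2) by simp
  ultimately show ?thesis by simp
qed

lemma eq_le1:
  assumes "is_ord_equilibrium lam b s" "k \<le> b"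
  shows "s k \<le> 1"
  using assms(2)
proof (induction k)
  case 0 then show ?case using assms(1) unfolding is_ord_equilibrium_def by simp
next
  case (Suc k)
  then have "s (Suc k) \<le> s k" using assms(1) unfolding is_ord_equilibrium_def
    by (metis One_nat_def Suc_le_mono diff_Suc_1 le0)
  then show ?case using Suc by simp
qed

lemma eq_nonneg:
  assumes "is_ord_equilibrium lam b s" "b \<ge> 1"
  shows "s b \<ge> 0"
proof -
  have "s (b+1) \<le> s b" "s (b+1) = 0" using assms unfolding is_ord_equilibrium_def by auto
  then show ?thesis by simp
qed

lemma eq_rec:
  assumes "is_ord_equilibrium lam b s" "1 \<le> k" "k \<le> b"
  shows "s k = lam * ((s (k-1))\<^sup>2 - (s b)\<^sup>2)"
proof -
  have "\<forall>j. j \<le> b - 1 \<longrightarrow> s (b - j) = lam * ((s (b - j - 1))\<^sup>2 - (s b)\<^sup>2)"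
  proof (intro allI impI)
    fix j assume "j \<le> b - 1"
    then show "s (b - j) = lam * ((s (b - j - 1))\<^sup>2 - (s b)\<^sup>2)"
    proof (induction j)
      case 0
      have "mf_field lam s b = 0" "s (b+1) = 0" using assms unfolding is_ord_equilibrium_def by auto
      then show ?case unfolding mf_field_def by (simp add: algebra_simps)
    next
      case (Suc j)
      let ?k = "b - Suc j"
      have k1: "1 \<le> ?k" "?k \<le> b" "?k + 1 = b - j" using Suc.prems by auto
      have "mf_field lam s ?k = 0" using assms k1 unfolding is_ord_equilibrium_def by blast
      moreover have "s (b - j) = lam * ((s (b - j - 1))\<^sup>2 - (s b)\<^sup>2)" using Suc.IH Suc.prems by simp
      moreover have "b - j - 1 = ?k" by simp
      ultimately have "s (b - j) = lam * ((s ?k)\<^sup>2 - (s b)\<^sup>2)" "lam * ((s (?k - 1))\<^sup>2 - (s ?k)\<^sup>2) - (s ?k - s (b - j)) = 0"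
        using k1 unfolding mf_field_def by (metis, metis)
      then show ?case by (simp add: algebra_simps)
    qed
  qed
  moreover have "b - k \<le> b - 1" using assms by simp
  ultimately have h: "s (b - (b - k)) = lam * ((s (b - (b - k) - 1))\<^sup>2 - (s b)\<^sup>2)"
    by blast
  have e: "b - (b - k) = k" using assms by simp
  show ?thesis using h unfolding e .
qed

lemma eq_xs:
  assumes "is_ord_equilibrium lam b s" "k \<le> b"
  shows "s k = xs lam (s b) k"
  using assms(2)
proof (induction k)
  case 0 then show ?case using assms(1) unfolding is_ord_equilibrium_def by simp
next
  case (Suc k)
  then have h1: "s k = xs lam (s b) k" by simp
  have "s (Suc k) = lam * ((s (Suc k - 1))\<^sup>2 - (s b)\<^sup>2)" using eq_rec[OF assms(1), of "Suc k"] Suc.prems by linarith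
  then have "s (Suc k) = lam * ((s k)\<^sup>2 - (s b)\<^sup>2)" by (simp only: diff_Suc_1)
  then show ?case by (simp only: xs.simps h1)
qed

lemma xs_strict:
  assumes "0 < lam" "0 \<le> t" "t < t'" "\<forall>k\<le>b. xs lam t' k \<ge> 0" "1 \<le> k" "k \<le> b"
  shows "xs lam t k > xs lam t' k"
  using assms(5,6)
proof (induction k)
  case 0 then show ?case by simp
next
  case (Suc k)
  show ?case
  proof (cases "k = 0")
    case True
    have "t\<^sup>2 < t'\<^sup>2" using assms by (simp add: power_strict_mono)
    then show ?thesis using True assms by simp
  next
    case False
    then have "xs lam t k > xs lam t' k" using Suc by simp
    moreover have "xs lam t' k \<ge> 0" using assms Suc by simp
    ultimately have "(xs lam t k)\<^sup>2 > (xs lam t' k)\<^sup>2" by (simp add: power_strict_mono)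
    moreover have "t\<^sup>2 < t'\<^sup>2" using assms by (simp add: power_strict_mono)
    ultimately show ?thesis using assms by simp
  qed
qed

lemma eq_unique:
  assumes "0 < lam" "b \<ge> 1" "is_ord_equilibrium lam b s" "is_ord_equilibrium lam b s'"
  shows "s = s'"
proof -
  have P: "\<forall>k\<le>b. xs lam (u b) k \<ge> 0" "u b \<ge> 0" "xs lam (u b) b = u b"
    if "is_ord_equilibrium lam b u" for u
  proof -
    show "\<forall>k\<le>b. xs lam (u b) k \<ge> 0"
    proof (intro allI impI)
      fix k assume k: "k \<le> b"
      have "u k = xs lam (u b) k" using eq_xs[OF that k] .
      moreover have "u b \<le> u k" using eq_chain[OF that k] .
      ultimately show "xs lam (u b) k \<ge> 0" using eq_nonneg[OF that assms(2)] by linarith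
    qed
    show "u b \<ge> 0" using eq_nonneg[OF that assms(2)] .
    show "xs lam (u b) b = u b" using eq_xs[OF that, of b] by (metis order_refl)
  qed
  have "s b = s' b"
  proof (rule ccontr)
    assume "s b \<noteq> s' b"
    then consider "s b < s' b" | "s' b < s b" by linarith
    then show False
    proof cases
      case 1
      from xs_strict[OF assms(1) P(2)[OF assms(3)] 1 P(1)[OF assms(4)] assms(2) order_refl]
      show False using P(3)[OF assms(3)] P(3)[OF assms(4)] 1 by linarith
    next
      case 2
      from xs_strict[OF assms(1) P(2)[OF assms(4)] 2 P(1)[OF assms(3)] assms(2) order_refl]
      show False using P(3)[OF assms(3)] P(3)[OF assms(4)] 2 by linarith
    qed
  qed
  show ?thesis
  proof
    fix k
    show "s k = s' k"
    proof (cases "k \<le> b")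
      case True then show ?thesis using eq_xs[OF assms(3) True] eq_xs[OF assms(4) True] \<open>s b = s' b\<close> by metis
    next
      case False then show ?thesis using assms(3,4) unfolding is_ord_equilibrium_def by simp
    qed
  qed
qed



primrec mn :: "real \<Rightarrow> real \<Rightarrow> nat \<Rightarrow> real" where
  "mn lam t 0 = 1"
| "mn lam t (Suc k) = min (mn lam t k) (xs lam t (Suc k))"

lemma xs_cont: "continuous_on S (\<lambda>t. xs lam t k)"
  by (induction k) (auto intro!: continuous_intros)

lemma mn_cont: "continuous_on S (\<lambda>t. mn lam t k)"
  by (induction k) (auto intro!: continuous_intros xs_cont)

lemma mn_le: "j \<le> k \<Longrightarrow> mn lam t k \<le> xs lam t j"
proof (induction k)
  case 0 then show ?case by simp
next
  case (Suc k)
  then show ?case by (cases "j = Suc k") (auto simp: min.coboundedI1)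
qed

lemma mn_ex: "\<exists>j\<le>k. mn lam t k = xs lam t j"
proof (induction k)
  case 0 then show ?case by simp
next
  case (Suc k)
  then obtain j where "j \<le> k" "mn lam t k = xs lam t j" by blast
  then show ?case by (cases "mn lam t k \<le> xs lam t (Suc k)") (auto simp: min_def intro: le_SucI)
qed

lemma xs0_nonneg: "0 < lam \<Longrightarrow> xs lam 0 k \<ge> 0"
  by (induction k) auto

lemma xs_dec:
  assumes "0 < lam" "lam < 1" "0 \<le> t" "\<forall>k\<le>b. xs lam t k \<ge> 0" "k < b"
  shows "xs lam t (Suc k) \<le> xs lam t k"
  using assms(5)
proof (induction k)
  case 0
  have "lam * t\<^sup>2 \<ge> 0" using assms(1) by simp
  moreover have "xs lam t (Suc 0) = lam - lam * t\<^sup>2" by (simp add: algebra_simps)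
  moreover have "xs lam t 0 = 1" by simp
  ultimately show ?case using assms by linarith
next
  case (Suc k)
  then have h: "xs lam t (Suc k) \<le> xs lam t k" by simp
  have "Suc k \<le> b" using Suc.prems by simp
  then have "0 \<le> xs lam t (Suc k)" using assms(4) by blast
  then have "(xs lam t (Suc k))\<^sup>2 \<le> (xs lam t k)\<^sup>2" using h by (simp add: power_mono)
  then have "lam * ((xs lam t (Suc k))\<^sup>2 - t\<^sup>2) \<le> lam * ((xs lam t k)\<^sup>2 - t\<^sup>2)"
    using assms(1) by (intro mult_left_mono) auto
  then show ?case by simp
qed

lemma xs_mono:
  assumes "0 < lam" "lam < 1" "0 \<le> t" "\<forall>k\<le>b. xs lam t k \<ge> 0" "j \<le> k" "k \<le> b"
  shows "xs lam t k \<le> xs lam t j"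
  using assms(5,6)
proof (induction k)
  case 0 then show ?case by simp
next
  case (Suc k)
  show ?case
  proof (cases "j = Suc k")
    case True then show ?thesis by simp
  next
    case False
    then have "xs lam t k \<le> xs lam t j" using Suc by simp
    moreover have "xs lam t (Suc k) \<le> xs lam t k" using xs_dec[OF assms(1-4)] Suc.prems by simp
    ultimately show ?thesis by linarith
  qed
qed

lemma eq_exists:
  assumes "0 < lam" "lam < 1" "b \<ge> 1"
  shows "\<exists>s. is_ord_equilibrium lam b s"
proof -
  let ?g = "\<lambda>t. t - mn lam t b"
  have c: "continuous_on {0..1} ?g" by (intro continuous_intros mn_cont)
  have "mn lam 0 b \<ge> 0"
    using mn_ex[of b lam 0] xs0_nonneg[OF assms(1)] by metis
  then have g0: "?g 0 \<le> 0" by simp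
  have "mn lam 1 b \<le> xs lam 1 1" using mn_le[of 1 b lam 1] assms(3) by simp
  then have g1: "0 \<le> ?g 1" by simp
  obtain t where t: "0 \<le> t" "t \<le> 1" "?g t = 0" using IVT'[of ?g 0 0 1, OF g0 g1 _ c] by auto
  have tm: "mn lam t b = t" using t by simp
  have ge: "\<forall>k\<le>b. xs lam t k \<ge> t" using mn_le[of _ b lam t] tm by metis
  then have nn: "\<forall>k\<le>b. xs lam t k \<ge> 0" using t by force
  obtain k0 where k0: "k0 \<le> b" "mn lam t b = xs lam t k0" using mn_ex by blast
  have "xs lam t b \<le> xs lam t k0" using xs_mono[OF assms(1,2) t(1) nn k0(1) order_refl] .
  then have xb: "xs lam t b = t" using ge k0 tm by force
  define s where "s = (\<lambda>k. if k \<le> b then xs lam t k else 0)"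
  have "is_ord_equilibrium lam b s"
    unfolding is_ord_equilibrium_def
  proof (intro conjI allI impI)
    show "s 0 = 1" unfolding s_def by simp
    fix k
    show "b < k \<Longrightarrow> s k = 0" unfolding s_def by simp
  next
    fix k assume k: "1 \<le> k \<and> k \<le> b"
    then obtain m where m: "k = Suc m" by (cases k) auto
    show "s k \<le> s (k - 1)" unfolding s_def using k m xs_dec[OF assms(1,2) t(1) nn, of m] by simp
    show "s (k + 1) \<le> s k"
    proof (cases "k < b")
      case True then show ?thesis unfolding s_def using xs_dec[OF assms(1,2) t(1) nn, of k] by simp
    next
      case False then show ?thesis unfolding s_def using k xb t by simp
    qed
    show "mf_field lam s k = 0"
    proof (cases "k < b")
      case True
      then have "s k = lam * ((xs lam t m)\<^sup>2 - t\<^sup>2)" "s (k+1) = lam * ((s k)\<^sup>2 - t\<^sup>2)" "s (k-1) = xs lam t m"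
        unfolding s_def using m by auto
      then show ?thesis unfolding mf_field_def by (simp add: algebra_simps)
    next
      case False
      then have "k = b" using k by simp
      then have "s k = lam * ((xs lam t m)\<^sup>2 - t\<^sup>2)" "s (k+1) = 0" "s (k-1) = xs lam t m" "s k = t"
        unfolding s_def using m xb by auto
      then show ?thesis unfolding mf_field_def by (simp add: algebra_simps)
    qed
  qed
  then show ?thesis by blast
qed

lemma sstar_eq:
  assumes "0 < lam" "lam < 1" "b \<ge> 1"
  shows "is_ord_equilibrium lam b (sstar lam b)"
proof -
  obtain s where s: "is_ord_equilibrium lam b s" using eq_exists[OF assms] by blast
  show ?thesis unfolding sstar_def
    by (rule theI[of _ s]) (use s eq_unique[OF assms(1,3)] in auto)
qed



definition Lop :: "nat \<Rightarrow> (nat \<Rightarrow> real) \<Rightarrow> (nat \<Rightarrow> real) \<Rightarrow> nat \<Rightarrow> real" where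
  "Lop b c z i = (if 0 < i then z (i-1) - z i else - z i) + c i * ((if i+1 < b then z (i+1) else 0) - z i)"

lemma minp:
  assumes c: "\<forall>i<b. c i \<ge> 0" and L: "\<forall>i<b. Lop b c z i \<le> 0"
  shows "\<forall>i<b. z i \<ge> 0"
proof (rule ccontr)
  assume "\<not> (\<forall>i<b. z i \<ge> 0)"
  then obtain i where i: "i < b" "z i < 0" by force
  define m where "m = Min (z ` {..<b})"
  have fin: "finite (z ` {..<b})" "z ` {..<b} \<noteq> {}" using i by auto
  have mle: "\<And>q. q < b \<Longrightarrow> m \<le> z q" unfolding m_def using fin by (intro Min_le) auto
  have "m \<in> z ` {..<b}" unfolding m_def using fin by (rule Min_in)
  then have ex: "\<exists>p. p < b \<and> z p = m" by auto
  define p where "p = (LEAST p. p < b \<and> z p = m)"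
  have p: "p < b" "z p = m" using LeastI_ex[OF ex] unfolding p_def by auto
  have mneg: "m < 0" using mle[OF i(1)] i(2) by simp
  have first: "(if 0 < p then z (p-1) - z p else - z p) > 0"
  proof (cases "0 < p")
    case True
    have "\<not> (p - 1 < b \<and> z (p-1) = m)"
      using not_less_Least[of "p-1" "\<lambda>p. p < b \<and> z p = m"] True unfolding p_def[symmetric] by simp
    then have "z (p-1) \<noteq> m" using p by simp
    moreover have "m \<le> z (p-1)" using mle p by simp
    ultimately show ?thesis using True p by simp
  next
    case False then show ?thesis using p mneg by simp
  qed
  have "(if p+1 < b then z (p+1) else 0) - z p \<ge> 0" using mle p mneg by simp
  then have "c p * ((if p+1 < b then z (p+1) else 0) - z p) \<ge> 0" using c p by simp
  then have "Lop b c z p > 0" unfolding Lop_def using first by linarith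
  then show False using L p by force
qed

lemma jacT_carrier: "transpose_mat (jac lam b) \<in> carrier_mat b b"
  unfolding jac_def by simp

lemma jacT_entry:
  assumes "i < b" "j < b"
  shows "transpose_mat (jac lam b) $$ (i,j) =
    (if j = i then - 2 * lam * sstar lam b (i+1) - 1 else 0)
    + (if j = i - 1 \<and> 0 < i then 1 else 0)
    + (if j = i + 1 then 2 * lam * sstar lam b (i+1) else 0)"
  using assms unfolding jac_def by auto

lemma rowsum:
  assumes "i < b"
  shows "(\<Sum>j<b. transpose_mat (jac lam b) $$ (i,j) * z j) = Lop b (\<lambda>i. 2 * lam * sstar lam b (i+1)) z i"
proof -
  let ?A = "- 2 * lam * sstar lam b (i+1) - 1"
  let ?C = "2 * lam * sstar lam b (i+1)"
  have "(\<Sum>j<b. transpose_mat (jac lam b) $$ (i,j) * z j) =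
     (\<Sum>j<b. (if j = i then ?A * z j else 0) + (if j = i - 1 \<and> 0 < i then z j else 0)
       + (if j = i + 1 then ?C * z j else 0))"
  proof (rule sum.cong[OF refl])
    fix j assume "j \<in> {..<b}"
    then have j: "j < b" by simp
    show "transpose_mat (jac lam b) $$ (i,j) * z j = (if j = i then ?A * z j else 0) + (if j = i - 1 \<and> 0 < i then z j else 0)
       + (if j = i + 1 then ?C * z j else 0)"
      unfolding jacT_entry[OF assms j] by (auto simp: algebra_simps)
  qed
  also have "\<dots> = (\<Sum>j<b. (if j = i then ?A * z j else 0)) + (\<Sum>j<b. (if j = i - 1 \<and> 0 < i then z j else 0))
       + (\<Sum>j<b. (if j = i + 1 then ?C * z j else 0))"
    by (simp add: sum.distrib)
  also have "\<dots> = ?A * z i + (if 0 < i then z (i-1) else 0) + (if i + 1 < b then ?C * z (i+1) else 0)"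
  proof -
    have "(\<Sum>j<b. (if j = i - 1 \<and> 0 < i then z j else 0)) = (if 0 < i then z (i-1) else 0)"
    proof (cases "0 < i")
      case True
      then show ?thesis using assms by (simp add: sum.delta)
    next
      case False then show ?thesis by simp
    qed
    then show ?thesis using assms by (simp add: sum.delta)
  qed
  also have "\<dots> = Lop b (\<lambda>i. 2 * lam * sstar lam b (i+1)) z i"
    unfolding Lop_def by (simp add: algebra_simps)
  finally show ?thesis .
qed



abbreviation "BB lam b \<equiv> transpose_mat (jac lam b)"
abbreviation "cc lam b \<equiv> (\<lambda>i. 2 * lam * sstar lam b (i+1))"

lemma mult_entry:
  assumes "M \<in> carrier_mat b b" "i < b" "j < b"
  shows "(BB lam b * M) $$ (i,j) = (\<Sum>k<b. BB lam b $$ (i,k) * M $$ (k,j))"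
  using assms jacT_carrier[of lam b]
  by (simp add: index_mult_mat scalar_prod_def atLeast0LessThan)

lemma mult_vec_entry:
  assumes "v \<in> carrier_vec b" "i < b"
  shows "(BB lam b *\<^sub>v v) $ i = (\<Sum>k<b. BB lam b $$ (i,k) * v $ k)"
  using assms jacT_carrier[of lam b]
  by (simp add: index_mult_mat_vec scalar_prod_def atLeast0LessThan)

lemma cc_props:
  assumes "0 < lam" "lam < 1" "b \<ge> 1" "i < b"
  shows "cc lam b i \<ge> 0" "cc lam b i \<le> 2"
proof -
  have E: "is_ord_equilibrium lam b (sstar lam b)" using sstar_eq assms by blast
  have "sstar lam b b \<le> sstar lam b (i+1)" using eq_chain[OF E] assms by simp
  moreover have "sstar lam b b \<ge> 0" using eq_nonneg[OF E assms(3)] .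
  moreover have "sstar lam b (i+1) \<le> 1" using eq_le1[OF E] assms by simp
  ultimately show "cc lam b i \<ge> 0" "cc lam b i \<le> 2" using assms
    by (simp_all add: mult_le_one)
qed

lemma BB_inj:
  assumes "0 < lam" "lam < 1" "b \<ge> 1" "v \<in> carrier_vec b" "BB lam b *\<^sub>v v = 0\<^sub>v b"
  shows "v = 0\<^sub>v b"
proof -
  have c: "\<forall>i<b. cc lam b i \<ge> 0" using cc_props[OF assms(1-3)] by blast
  have L1: "\<forall>i<b. Lop b (cc lam b) (\<lambda>k. v $ k) i \<le> 0"
  proof (intro allI impI)
    fix i assume i: "i < b"
    have "(BB lam b *\<^sub>v v) $ i = 0" using assms(5) i by simp
    then show "Lop b (cc lam b) (\<lambda>k. v $ k) i \<le> 0"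
      using mult_vec_entry[OF assms(4) i, of lam] rowsum[OF i, of lam "\<lambda>k. v $ k"] by simp
  qed
  have L2: "\<forall>i<b. Lop b (cc lam b) (\<lambda>k. - v $ k) i \<le> 0"
  proof (intro allI impI)
    fix i assume i: "i < b"
    have "(BB lam b *\<^sub>v v) $ i = 0" using assms(5) i by simp
    then have "(\<Sum>k<b. BB lam b $$ (i,k) * v $ k) = 0" using mult_vec_entry[OF assms(4) i, of lam] by simp
    then have "(\<Sum>k<b. BB lam b $$ (i,k) * (- v $ k)) = 0" by (simp add: sum_negf)
    then show "Lop b (cc lam b) (\<lambda>k. - v $ k) i \<le> 0"
      using rowsum[OF i, of lam "\<lambda>k. - v $ k"] by simp
  qed
  have "\<forall>i<b. v $ i \<ge> 0" using minp[OF c L1] by simp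
  moreover have "\<forall>i<b. - v $ i \<ge> 0" using minp[OF c L2] by simp
  ultimately show ?thesis using assms(4) by (intro eq_vecI) (auto intro: order_antisym)
qed

lemma BB_inverse:
  assumes "0 < lam" "lam < 1" "b \<ge> 1"
  shows "mat_inv b (BB lam b) \<in> carrier_mat b b \<and> BB lam b * mat_inv b (BB lam b) = 1\<^sub>m b"
proof -
  have car: "BB lam b \<in> carrier_mat b b" by (rule jacT_carrier)
  have "det (BB lam b) \<noteq> 0"
    using det_0_iff_vec_prod_zero_field[OF car] BB_inj[OF assms] by blast
  then have "BB lam b \<in> Units (ring_mat TYPE(real) b ())" by (rule det_non_zero_imp_unit[OF car])
  then obtain M where M: "M \<in> carrier_mat b b" "M * BB lam b = 1\<^sub>m b" "BB lam b * M = 1\<^sub>m b"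
    unfolding Units_def ring_mat_def by auto
  have "mat_inv b (BB lam b) = M"
    unfolding mat_inv_def
  proof (rule the_equality)
    show "M \<in> carrier_mat b b \<and> BB lam b * M = 1\<^sub>m b \<and> M * BB lam b = 1\<^sub>m b" using M by simp
    fix M' assume M': "M' \<in> carrier_mat b b \<and> BB lam b * M' = 1\<^sub>m b \<and> M' * BB lam b = 1\<^sub>m b"
    have M'c: "M' \<in> carrier_mat b b" using M' by blast
    have "M' = M' * (BB lam b * M)" using M(3) M'c by simp
    also have "\<dots> = (M' * BB lam b) * M" by (rule assoc_mult_mat[OF M'c car M(1), symmetric])
    also have "\<dots> = M" using M(1) M' by simp
    finally show "M' = M" .
  qed
  then show ?thesis using M by simp
qed

lemma inv_diag:
  assumes "0 < lam" "lam < 1" "b \<ge> 1" "j < b"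
  shows "- (mat_inv b (BB lam b)) $$ (j,j) \<ge> 1/3"
proof -
  let ?M = "mat_inv b (BB lam b)"
  have M: "?M \<in> carrier_mat b b" "BB lam b * ?M = 1\<^sub>m b" using BB_inverse[OF assms(1-3)] by auto
  define z where "z = (\<lambda>k. - ?M $$ (k,j))"
  have Lz: "Lop b (cc lam b) z i = - (if i = j then 1 else 0)" if i: "i < b" for i
  proof -
    have "(BB lam b * ?M) $$ (i,j) = (if i = j then 1 else 0)" using M i assms(4) by simp
    then have "(\<Sum>k<b. BB lam b $$ (i,k) * ?M $$ (k,j)) = (if i = j then 1 else 0)"
      using mult_entry[OF M(1) i assms(4)] by simp
    then have "(\<Sum>k<b. BB lam b $$ (i,k) * z k) = - (if i = j then 1 else 0)"
      unfolding z_def by (simp add: sum_negf)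
    then show ?thesis using rowsum[OF i, of lam z] by simp
  qed
  have c: "\<forall>i<b. cc lam b i \<ge> 0" using cc_props[OF assms(1-3)] by blast
  have "\<forall>i<b. Lop b (cc lam b) z i \<le> 0" using Lz by simp
  then have zn: "\<forall>i<b. z i \<ge> 0" using minp[OF c] by blast
  have "Lop b (cc lam b) z j = -1" using Lz[OF assms(4)] by simp
  then have eq: "z j * (1 + cc lam b j) = 1 + (if 0 < j then z (j-1) else 0) + cc lam b j * (if j+1 < b then z (j+1) else 0)"
    unfolding Lop_def by (simp add: algebra_simps split: if_splits)
  have t1: "(if 0 < j then z (j-1) else 0) \<ge> 0" using zn assms(4) by simp
  have t2: "cc lam b j * (if j+1 < b then z (j+1) else 0) \<ge> 0" using zn c assms(4) by simp
  have "z j * (1 + cc lam b j) \<ge> 1" using eq t1 t2 by linarith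
  moreover have "z j * (1 + cc lam b j) \<le> z j * 3" using cc_props[OF assms] zn assms(4)
    by (intro mult_left_mono) auto
  ultimately show ?thesis unfolding z_def by linarith
qed



theorem lemma10:
  fixes b N :: nat and \<gamma> \<alpha> lam :: real
  assumes "b \<ge> 1"
    and "0 < \<gamma>" and "\<gamma> \<le> 1" and "\<alpha> > 0"
    and "lam = 1 - \<gamma> / (real N powr \<alpha>)"
    and "0 < lam" and "lam < 1"
  shows "- (1 / real N) * (\<Sum>i<b. (mat_inv b (transpose_mat (jac lam b))) $$ (i, i)
              * mf_ftilde lam (sstar lam b) (i+1))
         \<ge> lam * \<gamma> / (3 * real N powr (1 + \<alpha>))"
proof -
  let ?s = "sstar lam b"
  let ?M = "mat_inv b (transpose_mat (jac lam b))"
  have E: "is_ord_equilibrium lam b ?s" using sstar_eq assms(6,7,1) by blast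
  have gpos: "\<gamma> / (real N powr \<alpha>) > 0" using assms(5,7) by simp
  then have Npos: "real N powr \<alpha> > 0" using assms(2) by (simp add: zero_less_divide_iff)
  then have N0: "N > 0" by (cases "N = 0") auto
  have Npow: "real N powr (1 + \<alpha>) = real N * real N powr \<alpha>"
    using N0 by (simp add: powr_add)
  have ft: "mf_ftilde lam ?s (i+1) = ?s (i+1) - ?s (i+2)" if i: "i < b" for i
  proof -
    have "mf_field lam ?s (i+1) = 0" using E i unfolding is_ord_equilibrium_def by simp
    then show ?thesis unfolding mf_field_def mf_ftilde_def by (simp add: algebra_simps)
  qed
  have dnn: "?s (i+2) \<le> ?s (i+1)" if i: "i < b" for i
    using E i unfolding is_ord_equilibrium_def
    by (metis Suc_eq_plus1 add_2_eq_Suc' le_add2 less_eq_Suc_le)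
  have "(\<Sum>i<b. (1/3) * (?s (i+1) - ?s (i+2))) \<le> (\<Sum>i<b. (- ?M $$ (i, i)) * mf_ftilde lam ?s (i+1))"
  proof (rule sum_mono)
    fix i assume "i \<in> {..<b}"
    then have i: "i < b" by simp
    show "(1/3) * (?s (i+1) - ?s (i+2)) \<le> (- ?M $$ (i, i)) * mf_ftilde lam ?s (i+1)"
      unfolding ft[OF i] using inv_diag[OF assms(6,7,1) i] dnn[OF i]
      by (intro mult_right_mono) auto
  qed
  moreover have "(\<Sum>i<b. (1/3) * (?s (i+1) - ?s (i+2))) = (1/3) * (?s 1 - ?s (b+1))"
  proof -
    have "(\<Sum>i<b. (?s (Suc i + 1) - ?s (i+1))) = ?s (b+1) - ?s (0+1)"
      by (rule sum_lessThan_telescope)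
    then have "(\<Sum>i<b. (?s (i+1) - ?s (i+2))) = ?s 1 - ?s (b+1)"
      by (simp add: sum_subtractf)
    moreover have "(\<Sum>i<b. (1/3) * (?s (i+1) - ?s (i+2))) = (1/3) * (\<Sum>i<b. (?s (i+1) - ?s (i+2)))"
      by (rule sum_distrib_left[symmetric])
    ultimately show ?thesis by simp
  qed
  moreover have "?s (b+1) = 0" using E unfolding is_ord_equilibrium_def by simp
  ultimately have S: "(1/3) * ?s 1 \<le> (\<Sum>i<b. (- ?M $$ (i, i)) * mf_ftilde lam ?s (i+1))" by simp
  have s1: "?s 1 = lam * (1 - (?s b)\<^sup>2)" using eq_rec[OF E, of 1] assms(1) E
    unfolding is_ord_equilibrium_def by simp
  have sb0: "?s b \<ge> 0" using eq_nonneg[OF E assms(1)] .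
  have sb1: "?s b \<le> ?s 1" using eq_chain[OF E, of 1] assms(1) by simp
  have "?s 1 \<le> lam" using s1 assms(6) by (simp add: mult_left_le)
  have sbb: "?s b \<le> 1" using eq_le1[OF E, of b] by simp
  have "(?s b)\<^sup>2 \<le> ?s b" using sb0 sbb by (simp add: power2_eq_square mult_left_le)
  then have sq: "(?s b)\<^sup>2 \<le> lam" using sb1 \<open>?s 1 \<le> lam\<close> by linarith
  have "lam * (1 - lam) \<le> lam * (1 - (?s b)\<^sup>2)" using sq assms(6) by (intro mult_left_mono) auto
  then have s1lb: "lam * (\<gamma> / real N powr \<alpha>) \<le> ?s 1" using s1 assms(5) by simp
  have "lam * \<gamma> / (3 * real N powr (1 + \<alpha>)) = (1 / real N) * ((1/3) * (lam * (\<gamma> / real N powr \<alpha>)))"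
    unfolding Npow by simp
  also have "\<dots> \<le> (1 / real N) * ((1/3) * ?s 1)" using s1lb N0 by (intro mult_left_mono) auto
  also have "\<dots> \<le> (1 / real N) * (\<Sum>i<b. (- ?M $$ (i, i)) * mf_ftilde lam ?s (i+1))"
    using S N0 by (intro mult_left_mono) auto
  also have "\<dots> = - (1 / real N) * (\<Sum>i<b. ?M $$ (i, i) * mf_ftilde lam ?s (i+1))"
    by (simp add: sum_negf)
  finally show ?thesis .
qed


end
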